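(* Let $\beta\in(0,1)$, $V_{\mathrm{th}}\in\mathbb{R}$, and let $c_1,\dots,c_T\in\mathbb{R}$ be an arbitrary input sequence. Let $\mathcal{H}(x)=1$ if $x\ge 0$ and $\mathcal{H}(x)=0$ otherwise. (Sequential LIF with soft reset.) Define $u_0=0$, $s_0=0$ and, for $t=1,\dots,T$, $$u_t=\beta\,(u_{t-1}-V_{\mathrm{th}}s_{t-1})+c_t,\qquad s_t=\mathcal{H}(u_t-V_{\mathrm{th}}).$$ (Decoupled reset.) Define, for $t=1,\dots,T$, $u'_t=\sum_{k=1}^{t}\beta^{t-k}c_k$ (equivalently $u'_0=0$, $u'_t=\beta u'_{t-1}+c_t$), and define $A_1=0$, $d_1=V_{\mathrm{th}}$ and, for $t=2,\dots,T$, $$A_t=\begin{cases}\beta\,(1+A_{t-1}), & \text{if } u'_{t-1}\ge d_{t-1},\\ \beta\,A_{t-1}, & \text{if } u'_{t-1}< d_{t-1},\end{cases}\qquad d_t=V_{\mathrm{th}}\,(A_t+1).$$ Then for every $t=1,\dots,T$, $s_t=\mathcal{H}(u'_t-d_t)$; that is, the spike train obtained from the decoupled-reset computation (in which $u'_1,\dots,u'_T$ do not depend on any spikes and $d_1,\dots,d_T$ are obtained from $u'_1,\dots,u'_T$ alone) coincides with that of the sequential LIF neuron with soft reset.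
   Context: The sequence $(u'_1,\dots,u'_T)$ is the discrete convolution of $(c_1,\dots,c_T)$ with the kernel $(\beta^0,\beta^1,\dots,\beta^{T-1})$, so it can be computed in parallel (e.g. via FFT), while $(d_t)$ is obtained by a single linear-time scan over $(u'_t)$. *)

theory Defs
  imports Complex_Main
begin

definition heaviside :: "real \<Rightarrow> real" where
  "heaviside x = (if x \<ge> 0 then 1 else 0)"

text \<open>Sequential LIF neuron with soft reset: returns the pair (u_t, s_t);
  the input sequence is c_1, c_2, ... (c 0 is unused).\<close>
fun lif :: "real \<Rightarrow> real \<Rightarrow> (nat \<Rightarrow> real) \<Rightarrow> nat \<Rightarrow> real \<times> real" where
  "lif \<beta> Vth c 0 = (0, 0)"
| "lif \<beta> Vth c (Suc t) =
     (let (u, s) = lif \<beta> Vth c t;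
          u' = \<beta> * (u - Vth * s) + c (Suc t)
      in (u', heaviside (u' - Vth)))"

definition lif_u :: "real \<Rightarrow> real \<Rightarrow> (nat \<Rightarrow> real) \<Rightarrow> nat \<Rightarrow> real" where
  "lif_u \<beta> Vth c t = fst (lif \<beta> Vth c t)"

definition lif_s :: "real \<Rightarrow> real \<Rightarrow> (nat \<Rightarrow> real) \<Rightarrow> nat \<Rightarrow> real" where
  "lif_s \<beta> Vth c t = snd (lif \<beta> Vth c t)"

definition dec_u :: "real \<Rightarrow> (nat \<Rightarrow> real) \<Rightarrow> nat \<Rightarrow> real" where
  "dec_u \<beta> c t = (\<Sum>k=1..t. \<beta> ^ (t - k) * c k)"

text \<open>Decoupled reset: returns (A_t, d_t) for t \<ge> 1 (value at 0 is irrelevant and is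
  mapped to the t = 1 value).\<close>
fun dec_Ad :: "real \<Rightarrow> real \<Rightarrow> (nat \<Rightarrow> real) \<Rightarrow> nat \<Rightarrow> real \<times> real" where
  "dec_Ad \<beta> Vth c 0 = (0, Vth)"
| "dec_Ad \<beta> Vth c (Suc 0) = (0, Vth)"
| "dec_Ad \<beta> Vth c (Suc (Suc t)) =
     (let (A, d) = dec_Ad \<beta> Vth c (Suc t);
          A' = (if dec_u \<beta> c (Suc t) \<ge> d then \<beta> * (1 + A) else \<beta> * A)
      in (A', Vth * (A' + 1)))"

definition dec_A :: "real \<Rightarrow> real \<Rightarrow> (nat \<Rightarrow> real) \<Rightarrow> nat \<Rightarrow> real" where
  "dec_A \<beta> Vth c t = fst (dec_Ad \<beta> Vth c t)"

definition dec_d :: "real \<Rightarrow> real \<Rightarrow> (nat \<Rightarrow> real) \<Rightarrow> nat \<Rightarrow> real" where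
  "dec_d \<beta> Vth c t = snd (dec_Ad \<beta> Vth c t)"

end

theory Submission
  imports Defs
begin

lemma dec_u_Suc: "dec_u \<beta> c (Suc t) = \<beta> * dec_u \<beta> c t + c (Suc t)"
proof -
  have "dec_u \<beta> c (Suc t) = (\<Sum>k=1..t. \<beta> ^ (Suc t - k) * c k) + c (Suc t)"
    unfolding dec_u_def by simp
  also have "(\<Sum>k=1..t. \<beta> ^ (Suc t - k) * c k) = \<beta> * dec_u \<beta> c t"
    unfolding dec_u_def sum_distrib_left
    by (rule sum.cong) (auto simp: Suc_diff_le)
  finally show ?thesis .
qed

lemma lif_Suc: "lif_u \<beta> Vth c (Suc t) = \<beta> * (lif_u \<beta> Vth c t - Vth * lif_s \<beta> Vth c t) + c (Suc t)
  \<and> lif_s \<beta> Vth c (Suc t) = heaviside (lif_u \<beta> Vth c (Suc t) - Vth)"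
  unfolding lif_u_def lif_s_def by (simp add: case_prod_beta Let_def)

lemma dec_Suc: "dec_A \<beta> Vth c (Suc (Suc t)) =
   (if dec_u \<beta> c (Suc t) \<ge> dec_d \<beta> Vth c (Suc t) then \<beta> * (1 + dec_A \<beta> Vth c (Suc t)) else \<beta> * dec_A \<beta> Vth c (Suc t))
  \<and> dec_d \<beta> Vth c (Suc (Suc t)) = Vth * (dec_A \<beta> Vth c (Suc (Suc t)) + 1)"
  unfolding dec_A_def dec_d_def by (simp add: case_prod_beta Let_def)

lemma inv: "lif_u \<beta> Vth c (Suc t) = dec_u \<beta> c (Suc t) - Vth * dec_A \<beta> Vth c (Suc t)
  \<and> dec_d \<beta> Vth c (Suc t) = Vth * (dec_A \<beta> Vth c (Suc t) + 1)"
proof (induction t)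
  case 0
  then show ?case using lif_Suc[of \<beta> Vth c 0]
    by (simp add: lif_u_def lif_s_def dec_A_def dec_d_def dec_u_def)
next
  case (Suc t)
  have s: "lif_s \<beta> Vth c (Suc t) = heaviside (dec_u \<beta> c (Suc t) - dec_d \<beta> Vth c (Suc t))"
    using lif_Suc[of \<beta> Vth c t] Suc.IH by (simp add: algebra_simps)
  show ?case using lif_Suc[of \<beta> Vth c "Suc t"] dec_Suc[of \<beta> Vth c t] dec_u_Suc[of \<beta> c "Suc t"] Suc.IH s
    by (auto simp: heaviside_def algebra_simps)
qed

theorem mainTheorem1:
  fixes \<beta> Vth :: real and c :: "nat \<Rightarrow> real" and T :: nat
  assumes "0 < \<beta>" and "\<beta> < 1"
  shows "\<forall>t\<in>{1..T}. lif_s \<beta> Vth c t = heaviside (dec_u \<beta> c t - dec_d \<beta> Vth c t)"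
proof
  fix t assume "t \<in> {1..T}"
  then obtain n where t: "t = Suc n" by (cases t) auto
  show "lif_s \<beta> Vth c t = heaviside (dec_u \<beta> c t - dec_d \<beta> Vth c t)"
    using lif_Suc[of \<beta> Vth c n] inv[of \<beta> Vth c n] unfolding t by (simp add: algebra_simps)
qed

end
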